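(* Let $\varphi$ be a hexagonal grid whose reference triangle $T=(A,B,C)$ is nondegenerate and counterclockwise. Then every triangle of the grid that is nondegenerate and counterclockwise (as listed in the grid) has second isodynamic point equal to $X_{16}(T)$.
   Context: Let $\zeta=e^{i\pi/3}$ and $\Lambda=\{m+n\zeta: m,n\in\mathbb{Z}\}$. Call $p,q\in\Lambda$ adjacent if $|p-q|=1$, and let $\mathcal{E}$ be the set of unordered pairs $\{p,q\}$ of adjacent lattice points. A hexagonal grid is a map $\varphi:\mathcal{E}\to\mathbb{C}$ such that for every $p\in\Lambda$ there exist $c_p,r_p\in\mathbb{C}$ with $\varphi(\{p,p+\zeta^k\})=c_p+r_p\zeta^k$ for $k=0,\dots,5$. Thus the six points form a regular, possibly degenerate, hexagon $H_p$ listed counterclockwise. For each set $\{p,q,s\}\subset\Lambda$ of three pairwise adjacent lattice points listed counterclockwise, the corresponding triangle of the grid is $(\varphi(\{p,q\}),\varphi(\{q,s\}),\varphi(\{s,p\}))$. The reference triangle of $\varphi$ is $(\varphi(\{0,1\}),\varphi(\{1,\zeta\}),\varphi(\{\zeta,0\}))$. For a nondegenerate triangle with vertices $V_1,V_2,V_3$, let $\ell_i$ be the length of the side opposite $V_i$ and $\theta_i$ the angle at $V_i$. Its second isodynamic point $X_{16}$ has homogeneous barycentric coordinates $(\ell_1\sin(\theta_1-\pi/3):\ell_2\sin(\theta_2-\pi/3):\ell_3\sin(\theta_3-\pi/3))$. *)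

theory Defs
  imports "HOL-Analysis.Analysis"
begin

definition zeta :: complex where
  "zeta = exp (\<i> * of_real (pi / 3))"

definition Lambda :: "complex set" where
  "Lambda = {of_int m + of_int n * zeta | m n. True}"

definition adjacent :: "complex \<Rightarrow> complex \<Rightarrow> bool" where
  "adjacent p q \<longleftrightarrow> cmod (p - q) = 1"

text \<open>A grid assigns a point to each unordered pair {p,q} of adjacent lattice points;
  values on other sets are irrelevant.\<close>
definition hex_grid :: "(complex set \<Rightarrow> complex) \<Rightarrow> bool" where
  "hex_grid \<phi> \<longleftrightarrow> (\<forall>p\<in>Lambda. \<exists>c r. \<forall>k<(6::nat). \<phi> {p, p + zeta ^ k} = c + r * zeta ^ k)"

definition orient :: "complex \<Rightarrow> complex \<Rightarrow> complex \<Rightarrow> real" where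
  "orient a b c = Im (cnj (b - a) * (c - a))"

definition nondegenerate :: "complex \<Rightarrow> complex \<Rightarrow> complex \<Rightarrow> bool" where
  "nondegenerate a b c \<longleftrightarrow> orient a b c \<noteq> 0"

definition ccw :: "complex \<Rightarrow> complex \<Rightarrow> complex \<Rightarrow> bool" where
  "ccw a b c \<longleftrightarrow> orient a b c > 0"

definition tri_angle :: "complex \<Rightarrow> complex \<Rightarrow> complex \<Rightarrow> real" where
  "tri_angle a b c = arccos (Re (cnj (b - a) * (c - a)) / (cmod (b - a) * cmod (c - a)))"

definition x16_weight :: "complex \<Rightarrow> complex \<Rightarrow> complex \<Rightarrow> real" where
  "x16_weight a b c = cmod (b - c) * sin (tri_angle a b c - pi / 3)"

text \<open>Homogeneous (projective) representation of the point with barycentric coordinates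
  (w1:w2:w3): the pair (w1 V1 + w2 V2 + w3 V3, w1 + w2 + w3), determined up to a nonzero
  real factor.  If the weight sum is nonzero, the affine point is the quotient.\<close>
definition X16_hom :: "complex \<Rightarrow> complex \<Rightarrow> complex \<Rightarrow> complex \<times> real" where
  "X16_hom a b c =
    (let w1 = x16_weight a b c; w2 = x16_weight b c a; w3 = x16_weight c a b
     in (of_real w1 * a + of_real w2 * b + of_real w3 * c, w1 + w2 + w3))"

definition same_proj_point :: "complex \<times> real \<Rightarrow> complex \<times> real \<Rightarrow> bool" where
  "same_proj_point u v \<longleftrightarrow> (\<exists>t::real. t \<noteq> 0 \<and> fst u = of_real t * fst v \<and> snd u = t * snd v)"

end

theory Submission
  imports Defs
begin


lemma zeta_eq: "zeta = Complex (1/2) (sqrt 3 / 2)"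
  unfolding zeta_def cis_conv_exp[symmetric] by (simp add: complex_eq_iff cos_60 sin_60)

lemma Re_zeta[simp]: "Re zeta = 1/2" and Im_zeta[simp]: "Im zeta = sqrt 3 / 2"
  by (simp_all add: zeta_eq)

lemma zz: "zeta * zeta = zeta - 1"
  by (simp add: complex_eq_iff)

lemma zeta_pows: "zeta^0 = 1" "zeta^1 = zeta" "zeta^2 = zeta - 1" "zeta^3 = -1"
  "zeta^4 = -zeta" "zeta^5 = 1 - zeta"
proof -
  have 2: "zeta^2 = zeta - 1" using zz by (simp add: power2_eq_square)
  have 3: "zeta^3 = -1"
  proof -
    have "zeta^3 = zeta*(zeta*zeta)" by (simp add: eval_nat_numeral)
    also have "\<dots> = zeta*(zeta-1)" by (simp add: zz)
    also have "\<dots> = zeta*zeta - zeta" by (simp add: algebra_simps)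
    also have "\<dots> = -1" by (simp add: zz)
    finally show ?thesis .
  qed
  have 4: "zeta^4 = -zeta" using power_add[of zeta 1 3] 3 by simp
  have 5: "zeta^5 = 1 - zeta" using power_add[of zeta 2 3] 3 2 by simp
  show "zeta^0 = 1" "zeta^1 = zeta" "zeta^2 = zeta - 1" "zeta^3 = -1"
    "zeta^4 = -zeta" "zeta^5 = 1 - zeta" using 2 3 4 5 by simp_all
qed

lemma cmod_zeta[simp]: "cmod zeta = 1"
  by (simp add: zeta_def)

lemma cnj_zeta: "cnj zeta = 1 - zeta"
  by (simp add: complex_eq_iff)

definition Uw :: "complex \<Rightarrow> complex \<Rightarrow> complex \<Rightarrow> real" where
  "Uw a b c = cmod (b - c)^2 * (orient a b c - sqrt 3 * Re (cnj (b - a) * (c - a)))"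

definition Pr3 :: "complex \<Rightarrow> complex \<Rightarrow> complex \<Rightarrow> real" where
  "Pr3 a b c = cmod (b - c) * cmod (c - a) * cmod (a - b)"

lemma orient_cyc: "orient b c a = orient a b c"
  by (simp add: orient_def algebra_simps)

lemma Pr3_cyc: "Pr3 b c a = Pr3 a b c"
  by (simp add: Pr3_def)

lemma orient_distinct:
  assumes "orient a b c \<noteq> 0" shows "a \<noteq> b" "b \<noteq> c" "c \<noteq> a"
  using assms by (auto simp: orient_def algebra_simps)

lemma Pr3_pos: assumes "orient a b c \<noteq> 0" shows "Pr3 a b c > 0"
  using orient_distinct[OF assms] by (simp add: Pr3_def)

lemma x16w:
  assumes "orient a b c > 0"
  shows "x16_weight a b c = Uw a b c / (2 * Pr3 a b c)"
proof -
  define z where "z = cnj (b-a) * (c-a)"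
  have Imz: "Im z > 0" using assms by (simp add: orient_def z_def)
  have nz: "cmod z > 0" using Imz by auto
  have L: "cmod (b-a) * cmod (c-a) = cmod z" by (metis complex_mod_cnj norm_mult z_def)
  have t1: "\<bar>Re z / cmod z\<bar> \<le> 1" using abs_Re_le_cmod[of z] nz by (simp add: abs_div)
  have ang: "tri_angle a b c = arccos (Re z / cmod z)" unfolding tri_angle_def L z_def[symmetric] ..
  have cosv: "cos (tri_angle a b c) = Re z / cmod z" using t1 by (simp add: ang cos_arccos_abs)
  have "(Re z/cmod z)^2 + (Im z/cmod z)^2 = ((Re z)^2 + (Im z)^2)/(cmod z)^2"
    by (simp add: power_divide add_divide_distrib)
  also have "\<dots> = 1" using nz by (simp add: cmod_power2[symmetric])
  finally have "1 - (Re z / cmod z)^2 = (Im z / cmod z)^2" by simp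
  then have sinv: "sin (tri_angle a b c) = Im z / cmod z"
    using t1 Imz nz by (simp add: ang sin_arccos_abs real_sqrt_abs)
  have s: "sin (tri_angle a b c - pi/3) = (Im z - sqrt 3 * Re z) / (2 * cmod z)"
  proof -
    have "sin (tri_angle a b c - pi/3) = sin (tri_angle a b c) * cos (pi/3) - cos (tri_angle a b c) * sin (pi/3)"
      by (rule sin_diff)
    also have "\<dots> = (Im z/cmod z)*(1/2) - (Re z/cmod z)*(sqrt 3/2)" by (simp only: sinv cosv cos_60 sin_60)
    also have "\<dots> = (Im z - sqrt 3 * Re z) / (2 * cmod z)" using nz by (simp add: field_simps)
    finally show ?thesis .
  qed
  have bc: "cmod (b - c) > 0" using orient_distinct[of a b c] assms by auto
  have ab: "cmod (a - b) = cmod (b - a)" by (simp add: norm_minus_commute)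
  have o: "orient a b c = Im z" by (simp add: orient_def z_def)
  have u: "Uw a b c = cmod (b-c)^2 * (Im z - sqrt 3 * Re z)"
    unfolding Uw_def orient_def z_def by (rule refl)
  show ?thesis
    unfolding x16_weight_def s u Pr3_def ab L[symmetric]
    using bc orient_distinct[of a b c] assms by (simp add: field_simps power2_eq_square)
qed


lemma aux_hom:
  fixes a b c :: complex and u1 u2 u3 k :: real
  shows "(of_real (u1/k) * a + of_real (u2/k) * b + of_real (u3/k) * c, u1/k+u2/k+u3/k) =
     (of_real (1/k) * (of_real u1 * a + of_real u2 * b + of_real u3 * c), (u1+u2+u3)/k)"
  by (simp add: divide_inverse algebra_simps)

lemma X16_formula:
  assumes "orient a b c > 0"
  shows "X16_hom a b c = (of_real (1 / (2 * Pr3 a b c)) *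
     (of_real (Uw a b c) * a + of_real (Uw b c a) * b + of_real (Uw c a b) * c),
     (Uw a b c + Uw b c a + Uw c a b) / (2 * Pr3 a b c))"
proof -
  have o2: "orient b c a > 0" "orient c a b > 0" using assms orient_cyc by metis+
  have p: "Pr3 b c a = Pr3 a b c" "Pr3 c a b = Pr3 a b c" using Pr3_cyc by metis+
  show ?thesis
    unfolding X16_hom_def Let_def x16w[OF assms] x16w[OF o2(1)] x16w[OF o2(2)] p
    by (rule aux_hom)
qed

lemma cnj_scale: "cnj (l * x) * (l * y) = of_real (cmod l ^ 2) * (cnj x * y)"
proof -
  have "cnj (l*x)*(l*y) = (l*cnj l)*(cnj x*y)" by (simp add: algebra_simps)
  also have "\<dots> = of_real (cmod l ^ 2) * (cnj x * y)" by (simp only: complex_norm_square)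
  finally show ?thesis .
qed

lemma orient_scale: "orient (l*a+e) (l*b+e) (l*c+e) = cmod l ^ 2 * orient a b c"
proof -
  have "cnj (l*b+e - (l*a+e)) * (l*c+e - (l*a+e)) = of_real (cmod l ^ 2) * (cnj (b-a) * (c-a))"
    using cnj_scale[of l "b-a" "c-a"] by (simp add: algebra_simps)
  then show ?thesis by (simp add: orient_def)
qed

lemma Uw_scale: "Uw (l*a+e) (l*b+e) (l*c+e) = cmod l ^ 4 * Uw a b c"
proof -
  have 1: "cnj (l*b+e - (l*a+e)) * (l*c+e - (l*a+e)) = of_real (cmod l ^ 2) * (cnj (b-a) * (c-a))"
    using cnj_scale[of l "b-a" "c-a"] by (simp add: algebra_simps)
  have 2: "cmod (l*b+e - (l*c+e)) = cmod l * cmod (b - c)"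
    by (simp add: norm_mult[symmetric] algebra_simps)
  show ?thesis unfolding Uw_def orient_scale 2 1
    by (simp add: algebra_simps power2_eq_square eval_nat_numeral)
qed




lemma fin:
  fixes x y s :: real
  assumes ss2: "s * s = 3"
  shows "2 * y * ((x+1/2)^2 + (y+s/2)^2) * (x^2+x-y^2) + (x^2+y^2) * (-y - s*(x+1)) * ((x+1)*(x+1/2) - y*(y+s/2))
     + ((x+1)^2+y^2) * (s*x - y) * (x*(x+1/2) - y*(y+s/2)) = 0"
    and "2 * y * ((x+1/2)^2 + (y+s/2)^2) * (2*x*y+y) + (x^2+y^2) * (-y - s*(x+1)) * ((x+1)*(y+s/2) + y*(x+1/2))
     + ((x+1)^2+y^2) * (s*x - y) * (x*(y+s/2) + y*(x+1/2)) = 0"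
    and "2 * y * ((x+1/2)^2 + (y+s/2)^2) + (x^2+y^2) * (-y - s*(x+1)) + ((x+1)^2+y^2) * (s*x - y) = 2 * ((s*(x^2+y^2+x) + y)/2)"
proof -
  have ss: "s * (s * t) = 3 * t" for t using ss2 by (metis mult.assoc)
  show "2 * y * ((x+1/2)^2 + (y+s/2)^2) * (x^2+x-y^2) + (x^2+y^2) * (-y - s*(x+1)) * ((x+1)*(x+1/2) - y*(y+s/2))
     + ((x+1)^2+y^2) * (s*x - y) * (x*(x+1/2) - y*(y+s/2)) = 0"
    by (simp add: algebra_simps power2_eq_square ss ss2, (simp add: field_simps)?)
  show "2 * y * ((x+1/2)^2 + (y+s/2)^2) * (2*x*y+y) + (x^2+y^2) * (-y - s*(x+1)) * ((x+1)*(y+s/2) + y*(x+1/2))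
     + ((x+1)^2+y^2) * (s*x - y) * (x*(y+s/2) + y*(x+1/2)) = 0"
    by (simp add: algebra_simps power2_eq_square ss ss2, (simp add: field_simps)?)
  show "2 * y * ((x+1/2)^2 + (y+s/2)^2) + (x^2+y^2) * (-y - s*(x+1)) + ((x+1)^2+y^2) * (s*x - y) = 2 * ((s*(x^2+y^2+x) + y)/2)"
    by (simp add: algebra_simps power2_eq_square ss ss2, (simp add: field_simps)?)
qed

definition Qf :: "complex \<Rightarrow> complex \<Rightarrow> complex \<Rightarrow> real" where
  "Qf u v w = ((Re w)^2 + (Im w)^2) * ((Re u * Im v - Im u * Re v) - sqrt 3 * (Re u * Re v + Im u * Im v))"

lemma Uw_Q: "Uw a b c = Qf (b-a) (c-a) (b-c)"
  by (simp add: Uw_def Qf_def orient_def cmod_power2 algebra_simps)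

lemma T_ids:
  fixes P :: complex
  defines "T1 \<equiv> P*(P+1)" and "T2 \<equiv> (P+1)*(P+zeta)" and "T3 \<equiv> (P+zeta)*P"
  shows "of_real (Uw T1 T2 T3) * T1 + of_real (Uw T2 T3 T1) * T2 + of_real (Uw T3 T1 T2) * T3 = 0"
    and "Uw T1 T2 T3 + Uw T2 T3 T1 + Uw T3 T1 T2 = 2 * orient T1 T2 T3"
proof -
  obtain x y where P: "P = Complex x y" by (cases P)
  define s where "s = sqrt 3"
  have ss2: "s * s = 3" unfolding s_def by simp
  have ss: "s * (s * t) = 3 * t" for t using ss2 by (metis mult.assoc)
  have e1: "T2 - T1 = zeta*(P+1)" "T3 - T1 = (zeta - 1)*P" "T2 - T3 = P + zeta"
    "T3 - T2 = -(P+zeta)" "T1 - T2 = -(zeta*(P+1))" "T1 - T3 = -((zeta-1)*P)"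
    by (simp_all add: T1_def T2_def T3_def algebra_simps)
  have u1: "Uw T1 T2 T3 = 2 * y * ((x+1/2)^2 + (y+s/2)^2)"
    unfolding Uw_Q e1 Qf_def
    by (simp add: P s_def[symmetric] algebra_simps power2_eq_square ss ss2, (simp add: field_simps)?)
  have u2: "Uw T2 T3 T1 = (x^2+y^2) * (-y - s*(x+1))"
    unfolding Uw_Q e1 Qf_def
    by (simp add: P s_def[symmetric] algebra_simps power2_eq_square ss ss2, (simp add: field_simps)?)
  have u3: "Uw T3 T1 T2 = ((x+1)^2+y^2) * (s*x - y)"
    unfolding Uw_Q e1 Qf_def
    by (simp add: P s_def[symmetric] algebra_simps power2_eq_square ss ss2, (simp add: field_simps)?)
  have o: "orient T1 T2 T3 = (s*(x^2+y^2+x) + y)/2"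
    unfolding orient_def e1
    by (simp add: P s_def[symmetric] algebra_simps power2_eq_square ss ss2, (simp add: field_simps)?)
  have t: "Re T1 = x^2+x-y^2" "Im T1 = 2*x*y+y"
    "Re T2 = (x+1)*(x+1/2) - y*(y+s/2)" "Im T2 = (x+1)*(y+s/2) + y*(x+1/2)"
    "Re T3 = x*(x+1/2) - y*(y+s/2)" "Im T3 = x*(y+s/2) + y*(x+1/2)"
    by (simp_all add: T1_def T2_def T3_def P s_def[symmetric] field_simps power2_eq_square)
  show "of_real (Uw T1 T2 T3) * T1 + of_real (Uw T2 T3 T1) * T2 + of_real (Uw T3 T1 T2) * T3 = 0"
    unfolding complex_eq_iff using fin(1,2)[OF ss2, of y x] by (simp add: u1 u2 u3 t)
  show "Uw T1 T2 T3 + Uw T2 T3 T1 + Uw T3 T1 T2 = 2 * orient T1 T2 T3"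
    unfolding u1 u2 u3 o using fin(3)[OF ss2, of y x] by simp
qed

lemma equi_ids: "Uw 1 (1+zeta) zeta = 0" "Uw (1+zeta) zeta 1 = 0" "Uw zeta 1 (1+zeta) = 0"
  by (simp_all add: Uw_Q Qf_def algebra_simps power2_eq_square)

lemma affine_X16:
  fixes l e a b c :: complex
  assumes o: "orient (l*a+e) (l*b+e) (l*c+e) > 0"
  and z: "of_real (Uw a b c) * a + of_real (Uw b c a) * b + of_real (Uw c a b) * c = 0"
  shows "X16_hom (l*a+e) (l*b+e) (l*c+e) =
    (of_real (cmod l^4 * (Uw a b c + Uw b c a + Uw c a b) / (2 * Pr3 (l*a+e) (l*b+e) (l*c+e))) * e,
     cmod l^4 * (Uw a b c + Uw b c a + Uw c a b) / (2 * Pr3 (l*a+e) (l*b+e) (l*c+e)))"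
proof -
  define k where "k = cmod l ^ 4"
  define Q where "Q = Pr3 (l*a+e) (l*b+e) (l*c+e)"
  define u1 where "u1 = Uw a b c"
  define u2 where "u2 = Uw b c a"
  define u3 where "u3 = Uw c a b"
  have z': "of_real u1 * a + of_real u2 * b + of_real u3 * c = 0" using z by (simp only: u1_def u2_def u3_def)
  have s0: "of_real (1 / (2 * Q)) * (of_real (k * (u1+u2+u3)) * e) = of_real (1 / (2 * Q) * (k * (u1+u2+u3))) * e"
    by (simp only: of_real_mult mult.assoc)
  have s00: "1 / (2 * Q) * (k * (u1+u2+u3)) = k * (u1+u2+u3) / (2*Q)" by simp
  have s1: "of_real (1 / (2 * Q)) * (of_real (k * (u1+u2+u3)) * e) = of_real (k * (u1+u2+u3) / (2*Q)) * e"
    using s0 s00 by metis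
  have h: "of_real (k * u1)*(l*a+e) + of_real (k * u2)*(l*b+e) + of_real(k * u3)*(l*c+e)
     = of_real k * l * (of_real u1 * a + of_real u2 * b + of_real u3 * c)
       + of_real (k * (u1+u2+u3)) * e"
    by (simp add: algebra_simps)
  have X: "X16_hom (l*a+e) (l*b+e) (l*c+e) = (of_real (1 / (2 * Q)) *
     (of_real (k*u1) * (l*a+e) + of_real (k*u2) * (l*b+e) + of_real (k*u3) * (l*c+e)),
     (k*u1 + k*u2 + k*u3) / (2 * Q))"
    using X16_formula[OF o] by (simp only: Uw_scale k_def u1_def u2_def u3_def Q_def)
  have s2: "(k*u1 + k*u2 + k*u3) / (2 * Q) = k * (u1+u2+u3) / (2*Q)" by (simp add: algebra_simps)
  have "X16_hom (l*a+e) (l*b+e) (l*c+e) = (of_real (1/(2*Q)) * (of_real k * l * 0 + of_real (k*(u1+u2+u3))*e), (k*u1+k*u2+k*u3)/(2*Q))"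
    by (simp only: X h z')
  also have "\<dots> = (of_real (k*(u1+u2+u3)/(2*Q))*e, k*(u1+u2+u3)/(2*Q))"
    by (simp only: mult_zero_right add_0 s1 s2)
  finally show ?thesis by (simp only: k_def u1_def u2_def u3_def Q_def)
qed
definition Fg :: "complex \<Rightarrow> complex \<Rightarrow> complex \<Rightarrow> complex \<Rightarrow> complex \<Rightarrow> complex" where
  "Fg al ga d p q = al*p*q + ga*(p+q) + d"

lemma core:
  fixes al ga d p w :: complex
  assumes w: "cmod w = 1"
  and o: "orient (Fg al ga d p (p+w)) (Fg al ga d (p+w) (p+zeta*w)) (Fg al ga d (p+zeta*w) p) > 0"
  shows "(al = 0 \<longrightarrow> X16_hom (Fg al ga d p (p+w)) (Fg al ga d (p+w) (p+zeta*w)) (Fg al ga d (p+zeta*w) p) = (0,0))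
   \<and> (al \<noteq> 0 \<longrightarrow> (\<exists>W>0. X16_hom (Fg al ga d p (p+w)) (Fg al ga d (p+w) (p+zeta*w)) (Fg al ga d (p+zeta*w) p)
          = (of_real W * (d - ga^2/al), W)))"
proof (intro conjI impI)
  assume a0: "al = 0"
  define l where "l = ga * w"
  define e where "e = 2*ga*p + d"
  have v: "Fg al ga d p (p+w) = l*1 + e" "Fg al ga d (p+w) (p+zeta*w) = l*(1+zeta) + e"
    "Fg al ga d (p+zeta*w) p = l*zeta + e"
    by (simp_all add: Fg_def a0 l_def e_def algebra_simps)
  have z: "of_real (Uw 1 (1+zeta) zeta) * 1 + of_real (Uw (1+zeta) zeta 1) * (1+zeta) + of_real (Uw zeta 1 (1+zeta)) * zeta = 0"
    by (simp add: equi_ids)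
  show "X16_hom (Fg al ga d p (p+w)) (Fg al ga d (p+w) (p+zeta*w)) (Fg al ga d (p+zeta*w) p) = (0,0)"
    unfolding v using affine_X16[OF o[unfolded v] z] by (simp add: equi_ids)
next
  assume a0: "al \<noteq> 0"
  have w0: "w \<noteq> 0" using w by auto
  define l where "l = al * w^2"
  define e where "e = d - ga^2/al"
  define P where "P = (p + ga/al)/w"
  have v: "Fg al ga d p (p+w) = l*(P*(P+1)) + e" "Fg al ga d (p+w) (p+zeta*w) = l*((P+1)*(P+zeta)) + e"
    "Fg al ga d (p+zeta*w) p = l*((P+zeta)*P) + e"
    using a0 w0 by (simp_all add: Fg_def l_def e_def P_def field_simps power2_eq_square)
  note o' = o[unfolded v]
  define W where "W = cmod l^4 * (Uw (P*(P+1)) ((P+1)*(P+zeta)) ((P+zeta)*P) + Uw ((P+1)*(P+zeta)) ((P+zeta)*P) (P*(P+1))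
     + Uw ((P+zeta)*P) (P*(P+1)) ((P+1)*(P+zeta))) / (2 * Pr3 (l*(P*(P+1)) + e) (l*((P+1)*(P+zeta)) + e) (l*((P+zeta)*P) + e))"
  have X: "X16_hom (l*(P*(P+1)) + e) (l*((P+1)*(P+zeta)) + e) (l*((P+zeta)*P) + e) = (of_real W * e, W)"
    unfolding W_def by (rule affine_X16[OF o' T_ids(1)])
  have oT: "orient (P*(P+1)) ((P+1)*(P+zeta)) ((P+zeta)*P) > 0"
    using o' unfolding orient_scale by (simp add: zero_less_mult_iff)
  have l0: "cmod l > 0" using a0 w0 by (simp add: l_def)
  have pr: "Pr3 (l*(P*(P+1)) + e) (l*((P+1)*(P+zeta)) + e) (l*((P+zeta)*P) + e) > 0"
    using o' by (intro Pr3_pos) simp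
  have "W > 0" unfolding W_def T_ids(2) using oT l0 pr by simp
  then show "\<exists>W>0. X16_hom (Fg al ga d p (p+w)) (Fg al ga d (p+w) (p+zeta*w)) (Fg al ga d (p+zeta*w) p)
          = (of_real W * (d - ga^2/al), W)"
    using X unfolding v e_def by blast
qed



lemma Lam_mem: "of_int m + of_int n * zeta \<in> Lambda"
  unfolding Lambda_def by blast

lemma Lam_E: assumes "p \<in> Lambda" obtains m n where "p = of_int m + of_int n * zeta"
  using assms unfolding Lambda_def by blast

lemma Lam_diff: assumes "p \<in> Lambda" "q \<in> Lambda" shows "q - p \<in> Lambda"
proof -
  obtain m n where p: "p = of_int m + of_int n * zeta" using assms(1) by (rule Lam_E)
  obtain m' n' where q: "q = of_int m' + of_int n' * zeta" using assms(2) by (rule Lam_E)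
  have "q - p = of_int (m'-m) + of_int (n'-n) * zeta" by (simp add: p q algebra_simps)
  then show ?thesis using Lam_mem by metis
qed

definition U6 :: "complex set" where "U6 = {1, zeta, zeta - 1, -1, -zeta, 1 - zeta}"

lemma U6_neg: "u \<in> U6 \<Longrightarrow> -u \<in> U6"
  by (auto simp: U6_def)

lemma hexU:
  assumes "hex_grid \<phi>" "p \<in> Lambda"
  obtains c r where "\<And>u. u \<in> U6 \<Longrightarrow> \<phi> {p, p+u} = c + r*u"
proof -
  obtain c r where h: "\<forall>k<(6::nat). \<phi> {p, p + zeta ^ k} = c + r * zeta ^ k"
    using assms unfolding hex_grid_def by blast
  have "\<phi> {p, p+u} = c + r*u" if "u \<in> U6" for u
    using that h[rule_format, of 0] h[rule_format, of 1] h[rule_format, of 2] h[rule_format, of 3]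
      h[rule_format, of 4] h[rule_format, of 5]
    by (auto simp: U6_def zeta_pows)
  then show ?thesis using that by blast
qed

lemma unit_lattice:
  assumes "z \<in> Lambda" "cmod z = 1" shows "z \<in> U6"
proof -
  obtain m n where z: "z = of_int m + of_int n * zeta" using assms(1) by (rule Lam_E)
  have "(cmod z)^2 = 1" using assms(2) by simp
  then have "(of_int m + of_int n / 2)^2 + (of_int n * sqrt 3 / 2)^2 = (1::real)"
    by (simp add: cmod_power2 z)
  moreover have "(of_int n * sqrt 3 / 2)^2 = 3 * (of_int n)^2 / (4::real)"
    by (simp add: power_divide power_mult_distrib)
  ultimately have "real_of_int (m*m + m*n + n*n) = 1"
    by (simp add: power2_eq_square field_simps)
  then have e: "m*m + m*n + n*n = 1" by linarith
  have e1: "(2*m+n)^2 + 3*n^2 = 4" using e by (simp add: power2_eq_square algebra_simps)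
  have e2: "(2*n+m)^2 + 3*m^2 = 4" using e by (simp add: power2_eq_square algebra_simps)
  have "n^2 \<le> 1" using e1 by (smt (verit) zero_le_power2)
  then have n: "n = -1 \<or> n = 0 \<or> n = 1" using abs_square_le_1[of n] by auto
  have "m^2 \<le> 1" using e2 by (smt (verit) zero_le_power2)
  then have m: "m = -1 \<or> m = 0 \<or> m = 1" using abs_square_le_1[of m] by auto
  show ?thesis using n m e by (auto simp: z U6_def)
qed


definition Good :: "(complex set \<Rightarrow> complex) \<Rightarrow> complex \<Rightarrow> complex \<Rightarrow> complex \<Rightarrow> complex \<Rightarrow> bool" where
  "Good \<phi> al ga d p \<longleftrightarrow> (\<forall>u\<in>U6. \<phi> {p, p+u} = Fg al ga d p (p+u))"

lemma Fg_sym: "Fg al ga d p q = Fg al ga d q p"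
  by (simp add: Fg_def algebra_simps)

lemma Fg_lin: "Fg al ga d p (p+x) = (al*p*p + 2*ga*p + d) + (al*p + ga)*x"
  by (simp add: Fg_def algebra_simps)

lemma goodI:
  assumes hex: "hex_grid \<phi>" and p: "p \<in> Lambda" and uv: "u \<in> U6" "v \<in> U6" "u \<noteq> v"
    and eu: "\<phi> {p, p+u} = Fg al ga d p (p+u)" and ev: "\<phi> {p, p+v} = Fg al ga d p (p+v)"
  shows "Good \<phi> al ga d p"
proof -
  obtain c r where cr: "\<And>u. u \<in> U6 \<Longrightarrow> \<phi> {p, p+u} = c + r*u" using hexU[OF hex p] by blast
  define A where "A = al*p*p + 2*ga*p + d"
  define B where "B = al*p + ga"
  have 1: "c + r*u = A + B*u" using eu cr[OF uv(1)] Fg_lin[of al ga d p u] by (simp add: A_def B_def)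
  have 2: "c + r * v = A + B * v" using ev cr[OF uv(2)] Fg_lin[of al ga d p v] by (simp add: A_def B_def)
  have "(r - B) * (u - v) = 0" using 1 2 by (simp add: algebra_simps) (metis add_diff_cancel_left' diff_diff_eq2 add.commute)
  then have rB: "r = B" using uv(3) by simp
  then have cA: "c = A" using 1 by simp
  show ?thesis unfolding Good_def
    using cr rB cA Fg_lin by (simp add: A_def B_def)
qed

lemma third:
  assumes hex: "hex_grid \<phi>" and c: "c \<in> Lambda" and uv: "u \<in> U6" "v \<in> U6" "u \<noteq> v"
    and gu: "Good \<phi> al ga d (c+u)" and gv: "Good \<phi> al ga d (c+v)"
  shows "Good \<phi> al ga d c"
proof -
  have "\<phi> {c, c+x} = Fg al ga d c (c+x)" if "x \<in> U6" "Good \<phi> al ga d (c+x)" for x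
  proof -
    have "\<phi> {c+x, c+x+ -x} = Fg al ga d (c+x) (c+x+ -x)"
      using that U6_neg unfolding Good_def by blast
    then show ?thesis by (simp add: insert_commute Fg_sym)
  qed
  then show ?thesis using goodI[OF hex c uv] gu gv uv by blast
qed


abbreviation gp where "gp \<phi> al ga d m n \<equiv> Good \<phi> al ga d (of_int m + of_int n * zeta)"

lemma stepc:
  assumes hex: "hex_grid \<phi>" and g1: "gp \<phi> al ga d a1 b1" and g2: "gp \<phi> al ga d a2 b2"
    and uv: "u \<in> U6" "v \<in> U6" "u \<noteq> v"
    and e1: "of_int a1 + of_int b1 * zeta = (of_int m + of_int n * zeta) + u"
    and e2: "of_int a2 + of_int b2 * zeta = (of_int m + of_int n * zeta) + v"
  shows "gp \<phi> al ga d m n"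
  using third[OF hex Lam_mem uv] g1 g2 e1 e2 by metis

lemma S_up: "hex_grid \<phi> \<Longrightarrow> gp \<phi> al ga d m n \<Longrightarrow> gp \<phi> al ga d (m+1) n \<Longrightarrow> gp \<phi> al ga d m (n+1)"
  by (erule stepc[where u = "-zeta" and v = "1 - zeta"], assumption+) (simp_all add: U6_def algebra_simps complex_eq_iff)

lemma S_down: "hex_grid \<phi> \<Longrightarrow> gp \<phi> al ga d m n \<Longrightarrow> gp \<phi> al ga d (m+1) n \<Longrightarrow> gp \<phi> al ga d (m+1) (n-1)"
  by (erule stepc[where u = "zeta - 1" and v = "zeta"], assumption+) (simp_all add: U6_def algebra_simps complex_eq_iff)

lemma S_a: "hex_grid \<phi> \<Longrightarrow> gp \<phi> al ga d (m+1) n \<Longrightarrow> gp \<phi> al ga d m (n+1) \<Longrightarrow> gp \<phi> al ga d (m+1) (n+1)"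
  by (erule stepc[where u = "-zeta" and v = "-1"], assumption+) (simp_all add: U6_def algebra_simps complex_eq_iff)

lemma S_b: "hex_grid \<phi> \<Longrightarrow> gp \<phi> al ga d (m+1) n \<Longrightarrow> gp \<phi> al ga d (m+1) (n+1) \<Longrightarrow> gp \<phi> al ga d (m+2) n"
  by (erule stepc[where u = "-1" and v = "zeta - 1"], assumption+) (simp_all add: U6_def algebra_simps complex_eq_iff)

lemma S_c: "hex_grid \<phi> \<Longrightarrow> gp \<phi> al ga d m n \<Longrightarrow> gp \<phi> al ga d (m+1) (n-1) \<Longrightarrow> gp \<phi> al ga d m (n-1)"
  by (erule stepc[where u = "zeta" and v = "1"], assumption+) (simp_all add: U6_def algebra_simps complex_eq_iff)

lemma S_d: "hex_grid \<phi> \<Longrightarrow> gp \<phi> al ga d m n \<Longrightarrow> gp \<phi> al ga d m (n-1) \<Longrightarrow> gp \<phi> al ga d (m-1) n"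
  by (erule stepc[where u = "1" and v = "1 - zeta"], assumption+) (simp_all add: U6_def algebra_simps complex_eq_iff)


lemma all_good:
  assumes hex: "hex_grid \<phi>" and g0: "Good \<phi> al ga d 0" and g1: "Good \<phi> al ga d 1"
  shows "gp \<phi> al ga d m n"
proof -
  define Pr where "Pr m n \<longleftrightarrow> gp \<phi> al ga d m n \<and> gp \<phi> al ga d (m+1) n" for m n
  have base0: "Pr 0 0" using g0 g1 by (simp add: Pr_def)
  have up: "Pr m (n+1)" if "Pr m n" for m n
    using that S_up[OF hex] S_a[OF hex] unfolding Pr_def by blast
  have down: "Pr m (n-1)" if "Pr m n" for m n
    using that S_down[OF hex] S_c[OF hex] unfolding Pr_def by blast
  have right: "Pr (m+1) n" if "Pr m n" for m n
  proof -
    have "gp \<phi> al ga d (m+2) n" using that S_up[OF hex] S_a[OF hex] S_b[OF hex] unfolding Pr_def by blast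
    moreover have "m + 1 + 1 = m + 2" by simp
    ultimately show ?thesis using that unfolding Pr_def by metis
  qed
  have left: "Pr (m-1) n" if "Pr m n" for m n
  proof -
    have "gp \<phi> al ga d (m-1) n" using that S_down[OF hex] S_c[OF hex] S_d[OF hex] unfolding Pr_def by blast
    moreover have "m - 1 + 1 = m" by simp
    ultimately show ?thesis using that unfolding Pr_def by metis
  qed
  have col: "Pr 0 n" for n
  proof (induction n rule: int_induct[where k = 0])
    case base then show ?case by (rule base0)
  next
    case (step1 i) then show ?case using up by blast
  next
    case (step2 i) then show ?case using down by blast
  qed
  have "Pr m n"
  proof (induction m rule: int_induct[where k = 0])
    case base then show ?case by (rule col)
  next
    case (step1 i) then show ?case using right by blast
  next
    case (step2 i) then show ?case using left by blast
  qed
  then show ?thesis unfolding Pr_def by blast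
qed


lemma exists_base:
  assumes hex: "hex_grid \<phi>"
  shows "\<exists>al ga d. Good \<phi> al ga d 0 \<and> Good \<phi> al ga d 1"
proof -
  define ga where "ga = (\<phi> {0, zeta} - \<phi> {0, 1}) / (zeta - 1)"
  define d where "d = \<phi> {0, 1} - ga"
  define al where "al = (\<phi> {1, zeta} - ga*(1+zeta) - d) / zeta"
  have z1: "zeta - 1 \<noteq> 0" by (simp add: complex_eq_iff)
  have z0: "zeta \<noteq> 0" by (simp add: complex_eq_iff)
  have L0: "0 \<in> Lambda" using Lam_mem[of 0 0] by simp
  have L1: "1 \<in> Lambda" using Lam_mem[of 1 0] by simp
  have "Good \<phi> al ga d 0"
  proof (rule goodI[OF hex L0, of 1 zeta])
    show "1 \<in> U6" "zeta \<in> U6" by (simp_all add: U6_def)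
    show "1 \<noteq> zeta" by (simp add: complex_eq_iff)
    show "\<phi> {0, 0 + 1} = Fg al ga d 0 (0 + 1)" by (simp add: Fg_def d_def)
    have "ga * zeta + d = ga * (zeta - 1) + \<phi> {0, 1}" by (simp add: d_def algebra_simps)
    also have "\<dots> = \<phi> {0, zeta}" using z1 by (simp add: ga_def)
    finally show "\<phi> {0, 0 + zeta} = Fg al ga d 0 (0 + zeta)" by (simp add: Fg_def)
  qed
  moreover have "Good \<phi> al ga d 1"
  proof (rule goodI[OF hex L1, of "-1" "zeta - 1"])
    show "-1 \<in> U6" "zeta - 1 \<in> U6" by (simp_all add: U6_def)
    show "-1 \<noteq> zeta - 1" by (simp add: complex_eq_iff)
    show "\<phi> {1, 1 + -1} = Fg al ga d 1 (1 + -1)" by (simp add: Fg_def d_def insert_commute)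
    have "al * zeta + ga * (1 + zeta) + d = \<phi> {1, zeta}" using z0 by (simp add: al_def)
    then show "\<phi> {1, 1 + (zeta - 1)} = Fg al ga d 1 (1 + (zeta - 1))" by (simp add: Fg_def)
  qed
  ultimately show ?thesis by blast
qed

lemma good_all:
  assumes hex: "hex_grid \<phi>" and g0: "Good \<phi> al ga d 0" and g1: "Good \<phi> al ga d 1" and p: "p \<in> Lambda"
  shows "Good \<phi> al ga d p"
  using p all_good[OF hex g0 g1] by (metis Lam_E)

lemma edgeF:
  assumes G: "\<And>p. p \<in> Lambda \<Longrightarrow> Good \<phi> al ga d p" and p: "p \<in> Lambda" and q: "q \<in> Lambda"
    and c: "cmod (q - p) = 1"
  shows "\<phi> {p, q} = Fg al ga d p q"
proof -
  have "q - p \<in> U6" using unit_lattice[OF Lam_diff[OF p q] c] .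
  then have "\<phi> {p, p + (q-p)} = Fg al ga d p (p + (q-p))" using G[OF p] unfolding Good_def by blast
  then show ?thesis by simp
qed

lemma geo:
  fixes p q s :: complex
  assumes c1: "cmod (q - p) = 1" and c2: "cmod (s - q) = 1" and c3: "cmod (s - p) = 1"
    and o: "orient p q s > 0"
  shows "s = p + zeta * (q - p)"
proof -
  define w where "w = q - p"
  define v where "v = s - p"
  define z where "z = cnj w * v"
  have ww: "w * cnj w = 1" using complex_norm_square[of w] c1 by (simp add: w_def)
  have Imz: "Im z > 0" using o by (simp add: orient_def z_def w_def v_def)
  have "cmod z = cmod w * cmod v" by (simp add: z_def norm_mult)
  also have "\<dots> = 1" using c1 c3 by (simp add: w_def v_def)
  finally have cz: "(Re z)^2 + (Im z)^2 = 1" using cmod_power2[of z] by simp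
  have "(cmod (v - w))^2 = 1" using c2 by (simp add: v_def w_def)
  moreover have "(cmod (v - w))^2 = (cmod v)^2 + (cmod w)^2 - 2 * Re z"
    unfolding cmod_power2 by (simp add: z_def power2_eq_square algebra_simps)
  ultimately have Rez: "Re z = 1/2" using c1 c3 by (simp add: v_def w_def)
  have "(Im z)^2 = (sqrt 3 / 2)^2" using cz Rez by (simp add: power_divide)
  then have "Im z = sqrt 3 / 2" using Imz by (simp add: power2_eq_iff_nonneg)
  then have "z = zeta" using Rez by (simp add: complex_eq_iff)
  then have "v = zeta * w" using ww unfolding z_def
    by (metis mult.assoc mult.commute mult_1)
  then show ?thesis by (simp add: v_def w_def algebra_simps)
qed


theorem mainTheorem7:
  fixes \<phi> :: "complex set \<Rightarrow> complex"
  assumes grid: "hex_grid \<phi>"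
    and refnd: "nondegenerate (\<phi> {0, 1}) (\<phi> {1, zeta}) (\<phi> {zeta, 0})"
    and refccw: "ccw (\<phi> {0, 1}) (\<phi> {1, zeta}) (\<phi> {zeta, 0})"
  shows "\<forall>p q s. p \<in> Lambda \<and> q \<in> Lambda \<and> s \<in> Lambda \<and>
           adjacent p q \<and> adjacent q s \<and> adjacent s p \<and> ccw p q s \<and>
           nondegenerate (\<phi> {p, q}) (\<phi> {q, s}) (\<phi> {s, p}) \<and>
           ccw (\<phi> {p, q}) (\<phi> {q, s}) (\<phi> {s, p}) \<longrightarrow>
           same_proj_point (X16_hom (\<phi> {p, q}) (\<phi> {q, s}) (\<phi> {s, p}))
                           (X16_hom (\<phi> {0, 1}) (\<phi> {1, zeta}) (\<phi> {zeta, 0}))"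
proof (intro allI impI)
  fix p q s
  assume H: "p \<in> Lambda \<and> q \<in> Lambda \<and> s \<in> Lambda \<and>
           adjacent p q \<and> adjacent q s \<and> adjacent s p \<and> ccw p q s \<and>
           nondegenerate (\<phi> {p, q}) (\<phi> {q, s}) (\<phi> {s, p}) \<and>
           ccw (\<phi> {p, q}) (\<phi> {q, s}) (\<phi> {s, p})"
  obtain al ga d where g0: "Good \<phi> al ga d 0" and g1: "Good \<phi> al ga d 1"
    using exists_base[OF grid] by blast
  have G: "\<And>x. x \<in> Lambda \<Longrightarrow> Good \<phi> al ga d x" using good_all[OF grid g0 g1] .
  have pL: "p \<in> Lambda" and qL: "q \<in> Lambda" and sL: "s \<in> Lambda" using H by auto
  have c1: "cmod (q - p) = 1" using H by (simp add: adjacent_def norm_minus_commute)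
  have c2: "cmod (s - q) = 1" using H by (simp add: adjacent_def norm_minus_commute)
  have c3: "cmod (s - p) = 1" using H by (simp add: adjacent_def norm_minus_commute)
  have c3': "cmod (p - s) = 1" using H by (simp add: adjacent_def norm_minus_commute)
  have oP: "orient p q s > 0" using H by (simp add: ccw_def)
  define w where "w = q - p"
  have qw: "q = p + w" by (simp add: w_def)
  have sw: "s = p + zeta * w" using geo[OF c1 c2 c3 oP] by (simp add: w_def)
  have cw: "cmod w = 1" using c1 by (simp add: w_def)
  have e1: "\<phi> {p, q} = Fg al ga d p (p+w)" using edgeF[OF G pL qL c1] qw by simp
  have e2: "\<phi> {q, s} = Fg al ga d (p+w) (p+zeta*w)" using edgeF[OF G qL sL c2] qw sw by simp
  have e3: "\<phi> {s, p} = Fg al ga d (p+zeta*w) p" using edgeF[OF G sL pL c3'] sw by simp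
  have L0: "0 \<in> Lambda" using Lam_mem[of 0 0] by simp
  have L1: "1 \<in> Lambda" using Lam_mem[of 1 0] by simp
  have Lz: "zeta \<in> Lambda" using Lam_mem[of 0 1] by simp
  have r1: "\<phi> {0, 1} = Fg al ga d 0 (0+1)" using edgeF[OF G L0 L1] by simp
  have r2: "\<phi> {1, zeta} = Fg al ga d (0+1) (0+zeta*1)"
  proof -
    have "cmod (zeta - 1) = 1" using unit_lattice by (simp add: cmod_def power2_eq_square)
    then show ?thesis using edgeF[OF G L1 Lz] by simp
  qed
  have r3: "\<phi> {zeta, 0} = Fg al ga d (0+zeta*1) 0" using edgeF[OF G Lz L0] by simp
  have oT: "orient (Fg al ga d p (p+w)) (Fg al ga d (p+w) (p+zeta*w)) (Fg al ga d (p+zeta*w) p) > 0"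
    using H e1 e2 e3 by (simp add: ccw_def)
  have oR: "orient (Fg al ga d 0 (0+1)) (Fg al ga d (0+1) (0+zeta*1)) (Fg al ga d (0+zeta*1) 0) > 0"
    using refccw r1 r2 r3 by (simp add: ccw_def)
  note CT = core[OF cw oT]
  note CR = core[of 1 al ga d 0, OF _ oR]
  show "same_proj_point (X16_hom (\<phi> {p, q}) (\<phi> {q, s}) (\<phi> {s, p}))
                           (X16_hom (\<phi> {0, 1}) (\<phi> {1, zeta}) (\<phi> {zeta, 0}))"
  proof (cases "al = 0")
    case True
    then show ?thesis using CT CR unfolding e1 e2 e3 r1 r2 r3 same_proj_point_def
      by (intro exI[of _ 1]) simp
  next
    case False
    obtain W1 where W1: "W1 > 0" "X16_hom (Fg al ga d p (p+w)) (Fg al ga d (p+w) (p+zeta*w)) (Fg al ga d (p+zeta*w) p)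
          = (of_real W1 * (d - ga^2/al), W1)" using CT False by blast
    obtain W2 where W2: "W2 > 0" "X16_hom (Fg al ga d 0 (0+1)) (Fg al ga d (0+1) (0+zeta*1)) (Fg al ga d (0+zeta*1) 0)
          = (of_real W2 * (d - ga^2/al), W2)" using CR False by auto
    show ?thesis unfolding e1 e2 e3 r1 r2 r3 same_proj_point_def W1(2) W2(2)
      using W1(1) W2(1) by (intro exI[of _ "W1/W2"]) (simp add: of_real_divide)
  qed
qed

end
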